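(* Let $V\sim\mathrm{Exp}(\lambda)$, let $V_1,V_2$ be independent copies of $V$, and write $V_{(1:2)}=\min(V_1,V_2)$, $V_{(2:2)}=\max(V_1,V_2)$. For $p_0\ge 0$ and $r\in[0,1]$ define $$R(p_0,r)=\begin{cases}2p_0+2r\,\mathbb{E}[V] & \text{if } p_0\le (1-r)\mathbb{E}[V_{(1:2)}],\\ p_0+r\,\mathbb{E}[V_{(2:2)}]+p_0\Pr[V_{(1:2)}>p_0] & \text{if } (1-r)\mathbb{E}[V_{(1:2)}]<p_0\le(1-r)\mathbb{E}[V_{(2:2)}],\\ 2p_0\Pr[V>p_0] & \text{if } p_0>(1-r)\mathbb{E}[V_{(2:2)}],\end{cases}$$ and let $u_c^*=\sup_{p_0\ge0,r\in[0,1]}R(p_0,r)$, $u_{c,r=0}^*=\sup_{p_0\ge0}R(p_0,0)$. Then $u_c^*=2\mathbb{E}[V]=2/\lambda$ and $u_{c,r=0}^*=\frac{3}{2\lambda}\big(1+e^{-3}\big)$, so $\Delta:=u_c^*-u_{c,r=0}^*=\frac{e^3-3}{2\lambda e^3}>0$, and the relative increase $\mathcal{I}:=\Delta/u_{c,r=0}^*=\frac{e^3-3}{3(1+e^3)}\approx 0.27$ for all $\lambda\in(1,\infty)$.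
   Context: $R(p_0,r)$ is the expected revenue of a creator selling two identical NFTs at common mint price $p_0$ with royalty rate $r$, where a risk-neutral speculator buys 2, 1 or 0 units in the three price regions respectively, reselling to the highest-valuation end-buyers at their valuations, and unsold units are offered by the creator to remaining end-buyers at $p_0$. *)

theory Defs
  imports "HOL-Probability.Probability"
begin

text \<open>V1, V2 are the two independent
  copies of V on the probability space M; V is represented by V1.\<close>
definition revenue :: "'a measure \<Rightarrow> ('a \<Rightarrow> real) \<Rightarrow> ('a \<Rightarrow> real) \<Rightarrow> real \<Rightarrow> real \<Rightarrow> real" where
  "revenue M V1 V2 p0 r =
     (let EV = integral\<^sup>L M V1;
          Emin = integral\<^sup>L M (\<lambda>\<omega>. min (V1 \<omega>) (V2 \<omega>));
          Emax = integral\<^sup>L M (\<lambda>\<omega>. max (V1 \<omega>) (V2 \<omega>))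
      in if p0 \<le> (1 - r) * Emin then 2 * p0 + 2 * r * EV
         else if p0 \<le> (1 - r) * Emax then
           p0 + r * Emax + p0 * measure M {\<omega> \<in> space M. min (V1 \<omega>) (V2 \<omega>) > p0}
         else 2 * p0 * measure M {\<omega> \<in> space M. V1 \<omega> > p0})"

end

theory Submission
  imports Defs
begin

definition F :: "real \<Rightarrow> real \<Rightarrow> real \<Rightarrow> real" where
  "F l p r = (if p \<le> (1-r)*(1/(2*l)) then 2*p + 2*r*(1/l)
     else if p \<le> (1-r)*(3/(2*l)) then p + r*(3/(2*l)) + p*exp(-p*(l+l))
     else 2*p*exp(-p*l))"

lemma h_mono:
  fixes x :: real assumes "x \<le> 3/2"
  shows "x + x*exp(-2*x) \<le> 3/2 + 3/2*exp(-3)"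
proof -
  have "(\<lambda>x. x + x*exp(-2*x)) x \<le> (\<lambda>x. x + x*exp(-2*x)) (3/2)"
  proof (rule DERIV_nonneg_imp_nondecreasing[OF assms])
    fix y :: real
    have d: "((\<lambda>x. x + x*exp(-2*x)) has_real_derivative (1 + (exp(-2*y) + y*(exp(-2*y)*(-2))))) (at y)"
      by (auto intro!: derivative_eq_intros)
    have "2*y - 1 \<le> exp(2*y)" using exp_ge_add_one_self[of "2*y"] by linarith
    hence "(2*y - 1) * exp(-2*y) \<le> exp(2*y) * exp(-2*y)" by (simp add: mult_right_mono)
    also have "\<dots> = 1" by (simp add: exp_add[symmetric])
    finally have "0 \<le> 1 + (exp(-2*y) + y*(exp(-2*y)*(-2)))" by (simp add: algebra_simps)
    with d show "\<exists>d. ((\<lambda>x. x + x*exp(-2*x)) has_real_derivative d) (at y) \<and> 0 \<le> d" by blast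
  qed
  thus ?thesis by simp
qed

lemma xexp_le: fixes x :: real shows "x * exp(-x) \<le> 1"
proof -
  have "x \<le> exp x" using exp_ge_add_one_self[of x] by linarith
  hence "x * exp(-x) \<le> exp x * exp(-x)" by (simp add: mult_right_mono)
  thus ?thesis by (simp add: exp_add[symmetric])
qed

lemma xexp_le2: fixes x :: real shows "x * exp(-x) \<le> exp(-1)"
proof -
  have "x \<le> exp (x - 1)" using exp_ge_add_one_self[of "x-1"] by linarith
  hence "x * exp(-x) \<le> exp (x-1) * exp(-x)" by (simp add: mult_right_mono)
  thus ?thesis by (simp add: exp_add[symmetric])
qed

lemma boundF:
  assumes l: "l > 0" and p: "p \<ge> 0" and r: "0 \<le> r" "r \<le> 1"
  shows "F l p r \<le> 2/l"
proof -
  consider (a) "p \<le> (1-r)*(1/(2*l))" | (b) "\<not> p \<le> (1-r)*(1/(2*l))" "p \<le> (1-r)*(3/(2*l))"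
    | (c) "\<not> p \<le> (1-r)*(1/(2*l))" "\<not> p \<le> (1-r)*(3/(2*l))" by blast
  then show ?thesis
  proof cases
    case a
    have "2*p \<le> (1-r)/l" using a l by (simp add: field_simps)
    moreover have "(1-r)/l + 2*r*(1/l) \<le> 2/l" using r l by (simp add: divide_right_mono field_simps)
    ultimately have "2*p + 2*r*(1/l) \<le> 2/l" by (smt (verit) diff_divide_distrib)
    then show ?thesis using a by (simp add: F_def)
  next
    case b
    have "(2*l*p) * exp(-(2*l*p)) \<le> 1" by (rule xexp_le)
    hence "p*exp(-p*(l+l)) \<le> 1/(2*l)" using l by (simp add: field_simps mult.commute)
    moreover have "(1-r)*(3/(2*l)) + r*(3/(2*l)) = 3/(2*l)" by (simp only: distrib_right[symmetric]) simp
    hence "p + r*(3/(2*l)) \<le> 3/(2*l)" using b(2) by linarith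
    moreover have "3/(2*l) + 1/(2*l) = 2/l" using l by (simp add: field_simps)
    ultimately have "p + r*(3/(2*l)) + p*exp(-p*(l+l)) \<le> 2/l" by linarith
    thus ?thesis using b by (simp add: F_def)
  next
    case c
    have "(l*p) * exp(-(l*p)) \<le> 1" by (rule xexp_le)
    hence "p*exp(-p*l) \<le> 1/l" using l by (simp add: field_simps mult.commute)
    thus ?thesis using c l by (simp add: F_def field_simps)
  qed
qed

lemma bound0:
  assumes l: "l > 0" and p: "p \<ge> 0"
  shows "F l p 0 \<le> 3/(2*l)*(1+exp(-3))"
proof -
  have e0: "0 \<le> exp(-3::real)" by simp
  consider (a) "p \<le> (1/(2*l))" | (b) "\<not> p \<le> (1/(2*l))" "p \<le> (3/(2*l))"
    | (c) "\<not> p \<le> (1/(2*l))" "\<not> p \<le> (3/(2*l))" by blast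
  then show ?thesis
  proof cases
    case a
    have "2*p \<le> 1/l" using a l by (simp add: field_simps)
    moreover have "1/l \<le> 3/(2*l)*(1+exp(-3))" using l e0 by (simp add: field_simps)
    ultimately show ?thesis using a by (simp add: F_def)
  next
    case b
    have "l*p \<le> 3/2" using b l by (simp add: field_simps)
    hence "l*p + (l*p)*exp(-2*(l*p)) \<le> 3/2 + 3/2*exp(-3)" by (rule h_mono)
    hence "(l*p + (l*p)*exp(-2*(l*p)))/l \<le> (3/2 + 3/2*exp(-3))/l" using l
      by (simp add: divide_right_mono)
    moreover have "(l*p + (l*p)*exp(-2*(l*p)))/l = p + p*exp(-p*(l+l))" using l
      by (simp add: field_simps mult.commute)
    moreover have "(3/2 + 3/2*exp(-3))/l = 3/(2*l)*(1+exp(-3::real))" using l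
      by (simp add: field_simps)
    ultimately have "p + p*exp(-p*(l+l)) \<le> 3/(2*l)*(1+exp(-3))" by simp
    thus ?thesis using b by (simp add: F_def)
  next
    case c
    have "(l*p) * exp(-(l*p)) \<le> exp(-1)" by (rule xexp_le2)
    moreover have "exp(-1::real) \<le> 3/4"
    proof -
      have "2 \<le> exp(1::real)" using exp_ge_add_one_self[of 1] by simp
      thus ?thesis by (simp add: exp_minus field_simps)
    qed
    ultimately have "l*(2*p*exp(-p*l)) \<le> 3/2" by (simp add: mult.commute mult.left_commute)
    hence "2*p*exp(-p*l) \<le> 3/(2*l)" using l by (simp add: field_simps)
    hence "2*p*exp(-p*l) \<le> 3/(2*l)*(1+exp(-3))" using l e0
      by (smt (verit) divide_pos_pos mult_le_cancel_left1 )
    thus ?thesis using c by (simp add: F_def)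
  qed
qed

lemma F_max0: assumes l: "l > 0" shows "F l (3/(2*l)) 0 = 3/(2*l)*(1+exp(-3))"
proof -
  have "3/(2*l) * (l+l) = 3" using l by (simp add: field_simps)
  hence "exp(-(3/(2*l))*(l+l)) = exp(-3)" by simp
  moreover have "\<not> 3/(2*l) \<le> 1/(2*l)" using l by (simp add: field_simps)
  ultimately show ?thesis using l by (simp add: F_def algebra_simps add_divide_distrib)
qed

lemma F_max: assumes l: "l > 0" shows "F l 0 1 = 2/l"
  by (simp add: F_def)


theorem lemma5:
  fixes M :: "'a measure" and V1 V2 :: "'a \<Rightarrow> real" and l :: real
  assumes "prob_space M"
    and "l > 1"
    and "distributed M lborel V1 (exponential_density l)"
    and "distributed M lborel V2 (exponential_density l)"
    and "prob_space.indep_var M borel V1 borel V2"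
  shows "let uc = Sup ((\<lambda>(p0, r). revenue M V1 V2 p0 r) ` ({0..} \<times> {0..1}));
             uc0 = Sup ((\<lambda>p0. revenue M V1 V2 p0 0) ` {0..});
             \<Delta> = uc - uc0;
             I = \<Delta> / uc0
         in uc = 2 * integral\<^sup>L M V1 \<and> uc = 2 / l
            \<and> uc0 = 3 / (2 * l) * (1 + exp (-3))
            \<and> \<Delta> = (exp 3 - 3) / (2 * l * exp 3) \<and> \<Delta> > 0
            \<and> I = (exp 3 - 3) / (3 * (1 + exp 3))"
proof -
  interpret P: prob_space M by fact
  have l: "l > 0" using assms(2) by simp
  note D1 = assms(3) and D2 = assms(4)
  have Dm: "distributed M lborel (\<lambda>x. min (V1 x) (V2 x)) (exponential_density (l + l))"
    by (rule P.exponential_distributed_min[OF l l D1 D2 assms(5)])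
  have EV: "integral\<^sup>L M V1 = 1/l" using P.exponential_distributed_expectation[OF l D1] by simp
  have EV2: "integral\<^sup>L M V2 = 1/l" using P.exponential_distributed_expectation[OF l D2] by simp
  have Emin: "integral\<^sup>L M (\<lambda>x. min (V1 x) (V2 x)) = 1/(2*l)"
    using P.exponential_distributed_expectation[OF _ Dm] l by simp
  have i1: "integrable M V1" using P.erlang_ith_moment_integrable[OF l D1, of 1] by simp
  have i2: "integrable M V2" using P.erlang_ith_moment_integrable[OF l D2, of 1] by simp
  have im: "integrable M (\<lambda>x. min (V1 x) (V2 x))"
    using P.erlang_ith_moment_integrable[OF _ Dm, of 1] l by simp
  have "(\<lambda>x. max (V1 x) (V2 x)) = (\<lambda>x. V1 x + V2 x - min (V1 x) (V2 x))"
    by (auto simp: fun_eq_iff max_def min_def)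
  hence Emax: "integral\<^sup>L M (\<lambda>x. max (V1 x) (V2 x)) = 3/(2*l)"
    using i1 i2 im EV EV2 Emin l by (simp add: field_simps)
  have P1: "measure M {\<omega> \<in> space M. V1 \<omega> > p} = exp(-p*l)" if "p \<ge> 0" for p
    using P.exponential_distributedD_gt[OF D1 that l] by simp
  have Pm: "measure M {\<omega> \<in> space M. min (V1 \<omega>) (V2 \<omega>) > p} = exp(-p*(l+l))" if "p \<ge> 0" for p
    using P.exponential_distributedD_gt[OF Dm that] l by simp
  have R: "revenue M V1 V2 p r = F l p r" if "p \<ge> 0" for p r
    unfolding revenue_def Let_def EV Emin Emax P1[OF that] Pm[OF that] F_def
    by (rule refl)
  define uc where "uc = Sup ((\<lambda>(p0, r). revenue M V1 V2 p0 r) ` ({0..} \<times> {0..1}))"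
  define uc0 where "uc0 = Sup ((\<lambda>p0. revenue M V1 V2 p0 0) ` {0..})"
  have uc: "uc = 2/l" unfolding uc_def
  proof (rule cSup_eq_maximum)
    show "2/l \<in> (\<lambda>(p0, r). revenue M V1 V2 p0 r) ` ({0..} \<times> {0..1})"
      using R[of 0 1] F_max[OF l] by (auto intro!: image_eqI[where x="(0,1)"])
  next
    fix x assume "x \<in> (\<lambda>(p0, r). revenue M V1 V2 p0 r) ` ({0..} \<times> {0..1})"
    then obtain p r where "p \<ge> 0" "0 \<le> r" "r \<le> 1" "x = revenue M V1 V2 p r" by auto
    thus "x \<le> 2/l" using R boundF[OF l] by simp
  qed
  have uc0: "uc0 = 3/(2*l)*(1+exp(-3))" unfolding uc0_def
  proof (rule cSup_eq_maximum)
    have "3/(2*l) \<ge> 0" using l by simp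
    then show "3/(2*l)*(1+exp(-3)) \<in> (\<lambda>p0. revenue M V1 V2 p0 0) ` {0..}"
      using R[of "3/(2*l)" 0] F_max0[OF l] by (auto intro!: image_eqI[where x="3/(2*l)"])
  next
    fix x assume "x \<in> (\<lambda>p0. revenue M V1 V2 p0 0) ` {0..}"
    then obtain p where "p \<ge> 0" "x = revenue M V1 V2 p 0" by auto
    thus "x \<le> 3/(2*l)*(1+exp(-3))" using R bound0[OF l] by simp
  qed
  have e3: "exp (3::real) > 3" using exp_ge_add_one_self[of 3] by simp
  have em: "exp(-3::real) = 1 / exp 3" by (simp add: exp_minus field_simps)
  have D: "uc - uc0 = (exp 3 - 3) / (2 * l * exp 3)"
    unfolding uc uc0 em using l by (simp add: field_simps)
  show ?thesis
    unfolding uc_def[symmetric] uc0_def[symmetric] Let_def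
  proof (intro conjI)
    show "uc = 2 * integral\<^sup>L M V1" using uc EV by simp
    show "uc = 2/l" by fact
    show "uc0 = 3/(2*l)*(1+exp(-3))" by fact
    show "uc - uc0 = (exp 3 - 3) / (2 * l * exp 3)" by fact
    show "uc - uc0 > 0" unfolding D using e3 l by simp
    show "(uc - uc0)/uc0 = (exp 3 - 3) / (3 * (1 + exp 3))"
    proof -
      have "(uc - uc0)/uc0 = ((exp 3 - 3)/(2*l*exp 3)) / (3/(2*l)*(1+1/exp 3))"
        using D uc0 em by simp
      also have "\<dots> = (exp 3 - 3) / (3 * (1 + exp 3))"
      proof -
        have E: "exp (3::real) > 0" by simp
        have "\<And>E::real. E > 0 \<Longrightarrow> ((E - 3)/(2*l*E)) / (3/(2*l)*(1+1/E)) = (E - 3) / (3 * (1 + E))"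
        proof -
          fix E :: real assume E: "E > 0"
          have a: "3/(2*l)*(1+1/E) = (3*(E+1))/(2*l*E)" using E l by (simp add: field_simps)
          have b: "2*l*E \<noteq> 0" "3*(E+1) \<noteq> 0" using E l by auto
          show "((E - 3)/(2*l*E)) / (3/(2*l)*(1+1/E)) = (E - 3) / (3 * (1 + E))"
            unfolding a using b by (simp add: add.commute)
        qed
        from this[OF E] show ?thesis .
      qed
      finally show ?thesis .
    qed
  qed
qed

end
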